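(* Let $p$ be a prime, $q=p^r$, and let $a\in\mathbb{F}_q[t]$ be a polynomial that is not a perfect $p$-th power. Let $\ell\neq p$ be a prime. Put $C_1=a-1$ and $C_\ell=(a^\ell-1)/(a-1)$, and for $m\in\{1,\ell\}$ write $C_m=U_mV_m$ where $U_m$ is the power-free part and $V_m$ the power-full part of $C_m$. Then $$\deg(V_1)+\deg(V_\ell)\le 2\deg(a)-2,$$ and consequently $\deg(U_1)+\deg(U_\ell)\ge \ell\deg(a)-2\deg(a)+2$.
   Context: For a nonzero polynomial $c\in\mathbb{F}_q[t]$ written (up to a unit) as $\prod_\pi \pi^{e_\pi}$ over monic irreducibles $\pi$, its power-free part is $\prod_{e_\pi=1}\pi$ and its power-full part is $\prod_{e_\pi\ge2}\pi^{e_\pi}$ (times the leading-coefficient unit, which does not affect degrees). *)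

theory Defs
  imports "HOL-Computational_Algebra.Computational_Algebra" "HOL-Library.Cardinality"
begin

text \<open>Power-full part: product of the prime powers
  \<open>\<pi>^e\<close> with \<open>e \<ge> 2\<close>.  (The leading-coefficient unit is dropped; it does not
  affect degrees.)\<close>

definition powerfree_part :: "'a::field_gcd poly \<Rightarrow> 'a poly" where
  "powerfree_part c = (\<Prod>\<pi>\<in>{\<pi>\<in>prime_factors c. multiplicity \<pi> c = 1}. \<pi>)"

definition powerfull_part :: "'a::field_gcd poly \<Rightarrow> 'a poly" where
  "powerfull_part c =
     (\<Prod>\<pi>\<in>{\<pi>\<in>prime_factors c. multiplicity \<pi> c \<ge> 2}. \<pi> ^ multiplicity \<pi> c)"

end

theory Submission
  imports Defs "HOL-Number_Theory.Cong"
begin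

lemma my_CHAR_dvd_CARD: "CHAR('a::{finite,field}) dvd card (UNIV :: 'a set)"
proof -
  define c where "c = CHAR('a)"
  have c0: "c > 0" unfolding c_def by (rule finite_imp_CHAR_pos) simp
  define S where "S x = {y. \<exists>k. y = x + (of_nat k :: 'a)}" for x
  have Sim: "S x = (\<lambda>k. x + of_nat k) ` {..<c}" for x
  proof
    show "S x \<subseteq> (\<lambda>k. x + of_nat k) ` {..<c}"
    proof
      fix y assume "y \<in> S x"
      then obtain k where k: "y = x + of_nat k" by (auto simp: S_def)
      have "(of_nat k :: 'a) = of_nat (k mod c)"
        by (simp add: of_nat_eq_iff_cong_CHAR c_def cong_def)
      then show "y \<in> (\<lambda>k. x + of_nat k) ` {..<c}" using k c0 by auto
    qed
  qed (auto simp: S_def)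
  have cardS: "card (S x) = c" for x
  proof -
    have "inj_on (\<lambda>k. x + (of_nat k::'a)) {..<c}"
      by (intro inj_onI) (auto simp: of_nat_eq_iff_cong_CHAR c_def cong_def)
    thus ?thesis unfolding Sim by (simp add: card_image)
  qed
  have neg: "\<exists>j. - (of_nat i :: 'a) = of_nat j" for i
  proof -
    have "(of_nat i :: 'a) = of_nat (i mod c)"
      by (simp add: of_nat_eq_iff_cong_CHAR c_def cong_def)
    moreover have "of_nat (i mod c) + of_nat (c - i mod c) = (of_nat c :: 'a)"
      using c0 by (simp flip: of_nat_add)
    moreover have "(of_nat c :: 'a) = 0" by (simp add: c_def)
    ultimately show ?thesis by (metis add_eq_0_iff)
  qed
  have disj: "S x = S y" if "z \<in> S x" "z \<in> S y" for x y z
  proof -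
    have *: "S u \<subseteq> S v" if zu: "z \<in> S u" and zv: "z \<in> S v" for u v
    proof
      fix w assume "w \<in> S u"
      then obtain k where k: "w = u + of_nat k" by (auto simp: S_def)
      obtain i where i: "z = u + of_nat i" using zu by (auto simp: S_def)
      obtain j where j: "z = v + of_nat j" using zv by (auto simp: S_def)
      obtain i' where i': "- (of_nat i :: 'a) = of_nat i'" using neg by blast
      have "w = v + of_nat j + - of_nat i + of_nat k" using i j k by (simp add: algebra_simps)
      also have "\<dots> = v + of_nat (j + i' + k)" using i' by simp
      finally show "w \<in> S v" unfolding S_def by blast
    qed
    show ?thesis using *[of x y] *[of y x] that by blast
  qed
  have disj': "\<forall>c1\<in>range S. \<forall>c2\<in>range S. c1 \<noteq> c2 \<longrightarrow> c1 \<inter> c2 = {}"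
      using disj by blast
  have "c * card (range S) = card (\<Union>(range S))"
    by (rule card_partition) (use disj' cardS in auto)
  moreover have "\<Union>(range S) = UNIV"
    by (auto simp: S_def) (metis add.right_neutral of_nat_0)
  ultimately show ?thesis unfolding c_def by (metis dvd_triv_left)
qed

lemma char_eq:
  fixes p r :: nat
  assumes "prime p" "r > 0" "CARD('a::{finite,field}) = p ^ r"
  shows "CHAR('a) = p"
proof -
  have fin: "finite (UNIV :: 'a set)" by simp
  have "CHAR('a) > 0" using finite_imp_CHAR_pos[OF fin] .
  hence pc: "prime CHAR('a)" using prime_CHAR_semidom by blast
  have "CHAR('a) dvd p ^ r" using my_CHAR_dvd_CARD[where 'a='a] assms(3) by simp
  hence "CHAR('a) dvd p" using pc prime_dvd_power by blast
  thus ?thesis using pc assms(1) primes_dvd_imp_eq by blast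
qed

lemma frob_surj:
  assumes "prime CHAR('a::{finite,field})"
  shows "\<exists>y::'a. y ^ CHAR('a) = x"
proof -
  have "inj (\<lambda>x::'a. x ^ CHAR('a))"
  proof (rule injI)
    fix x y :: 'a assume h: "x ^ CHAR('a) = y ^ CHAR('a)"
    have "((x - y) + y) ^ CHAR('a) = (x-y) ^ CHAR('a) + y ^ CHAR('a)"
      by (rule freshmans_dream[OF assms refl])
    hence "(x-y) ^ CHAR('a) = 0" using h by simp
    thus "x = y" by simp
  qed
  hence "surj (\<lambda>x::'a. x ^ CHAR('a))" using finite_UNIV_inj_surj[of "\<lambda>x::'a. x ^ CHAR('a)"] by simp
  thus ?thesis by (metis surjD)
qed

lemma pth_root:
  fixes a :: "'a::{finite,field} poly"
  assumes pc: "prime CHAR('a)" and d: "pderiv a = 0"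
  shows "\<exists>b. a = b ^ CHAR('a)"
proof -
  define P where "P = CHAR('a)"
  have P0: "P > 0" using pc prime_gt_0_nat P_def by blast
  obtain g :: "'a \<Rightarrow> 'a" where g: "\<And>x. g x ^ P = x"
    using frob_surj[OF pc] unfolding P_def by metis
  have cz: "coeff a k = 0" if "\<not> P dvd k" for k
  proof -
    from that have "k \<noteq> 0" by (metis dvd_0_right)
    then obtain n where k: "k = Suc n" by (cases k) auto
    have "coeff (pderiv a) n = 0" using d by simp
    hence "of_nat k * coeff a k = 0" using k by (simp add: coeff_pderiv)
    moreover have "of_nat k \<noteq> (0::'a)" using that by (simp add: of_nat_eq_0_iff_char_dvd P_def)
    ultimately show ?thesis by simp
  qed
  define b where "b = (\<Sum>i\<le>degree a. monom (g (coeff a (P*i))) i)"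
  have "b ^ P = (\<Sum>i\<le>degree a. monom (g (coeff a (P*i))) i ^ P)"
    unfolding b_def by (rule freshmans_dream_sum) (simp_all add: pc P_def)
  also have "\<dots> = (\<Sum>i\<le>degree a. monom (coeff a (P*i)) (P*i))"
    by (simp add: monom_power g mult.commute)
  also have "\<dots> = a"
  proof (rule poly_eqI)
    fix n
    have "coeff (\<Sum>i\<le>degree a. monom (coeff a (P*i)) (P*i)) n
          = (\<Sum>i\<le>degree a. if i = n div P \<and> P dvd n then coeff a n else 0)"
      unfolding coeff_sum coeff_monom
      by (rule sum.cong) (auto simp: P0)
    also have "\<dots> = coeff a n"
    proof (cases "P dvd n")
      case True
      show ?thesis
      proof (cases "n div P \<le> degree a")
        case True
        then show ?thesis using \<open>P dvd n\<close> by (simp add: sum.delta)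
      next
        case False
        hence "n > degree a" using div_le_dividend[of n P] by linarith
        then show ?thesis by (simp add: coeff_eq_0 sum.neutral)
      qed
    next
      case False
      then show ?thesis using cz by simp
    qed
    finally show "coeff (\<Sum>i\<le>degree a. monom (coeff a (P*i)) (P*i)) n = coeff a n" .
  qed
  finally show ?thesis unfolding P_def by metis
qed

lemma deg_normalize_eq:
  fixes c :: "'a::field_gcd poly"
  shows "degree (normalize c) = degree c"
proof (cases "c = 0")
  case False
  have "degree (normalize c) \<le> degree c" by (rule dvd_imp_degree) (use False in auto)
  moreover have "degree c \<le> degree (normalize c)" by (rule dvd_imp_degree) (use False in auto)
  ultimately show ?thesis by simp
qed simp

lemma deg_as_sum:
  fixes c :: "'a::field_gcd poly"
  assumes "c \<noteq> 0"
  shows "degree c = (\<Sum>\<pi>\<in>prime_factors c. multiplicity \<pi> c * degree \<pi>)"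
proof -
  have "degree c = degree (\<Prod>\<pi>\<in>prime_factors c. \<pi> ^ multiplicity \<pi> c)"
    using prod_prime_factors[OF assms] deg_normalize_eq by metis
  also have "\<dots> = (\<Sum>\<pi>\<in>prime_factors c. degree (\<pi> ^ multiplicity \<pi> c))"
    by (rule degree_prod_eq_sum_degree) (auto dest: in_prime_factors_imp_prime)
  also have "\<dots> = (\<Sum>\<pi>\<in>prime_factors c. multiplicity \<pi> c * degree \<pi>)"
    by (rule sum.cong) (auto dest!: in_prime_factors_imp_prime simp: degree_power_eq)
  finally show ?thesis .
qed

lemma deg_V:
  fixes c :: "'a::field_gcd poly"
  shows "degree (powerfull_part c) = (\<Sum>\<pi>\<in>{\<pi>\<in>prime_factors c. multiplicity \<pi> c \<ge> 2}. multiplicity \<pi> c * degree \<pi>)"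
  unfolding powerfull_part_def
  by (subst degree_prod_eq_sum_degree) (auto dest!: in_prime_factors_imp_prime intro!: sum.cong simp: degree_power_eq)

lemma deg_U:
  fixes c :: "'a::field_gcd poly"
  shows "degree (powerfree_part c) = (\<Sum>\<pi>\<in>{\<pi>\<in>prime_factors c. multiplicity \<pi> c = 1}. multiplicity \<pi> c * degree \<pi>)"
  unfolding powerfree_part_def
  by (subst degree_prod_eq_sum_degree) (auto dest!: in_prime_factors_imp_prime)

lemma deg_UV:
  fixes c :: "'a::field_gcd poly"
  assumes "c \<noteq> 0"
  shows "degree (powerfree_part c) + degree (powerfull_part c) = degree c"
proof -
  have "prime_factors c = {\<pi>\<in>prime_factors c. multiplicity \<pi> c = 1} \<union> {\<pi>\<in>prime_factors c. multiplicity \<pi> c \<ge> 2}"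
    using prime_factors_multiplicity[of c] by auto
  hence "degree c = (\<Sum>\<pi>\<in>{\<pi>\<in>prime_factors c. multiplicity \<pi> c = 1} \<union> {\<pi>\<in>prime_factors c. multiplicity \<pi> c \<ge> 2}. multiplicity \<pi> c * degree \<pi>)"
    using deg_as_sum[OF assms] by simp
  also have "\<dots> = degree (powerfree_part c) + degree (powerfull_part c)"
    unfolding deg_U deg_V by (rule sum.union_disjoint) auto
  finally show ?thesis by simp
qed

lemma prod_prime_powers_dvd:
  fixes x :: "'a::field_gcd poly"
  assumes "finite S" "\<forall>\<pi>\<in>S. prime \<pi>" "\<forall>\<pi>\<in>S. \<pi> ^ f \<pi> dvd x"
  shows "(\<Prod>\<pi>\<in>S. \<pi> ^ f \<pi>) dvd x"
  using assms
proof (induction S rule: finite_induct)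
  case (insert q S)
  have "coprime q (\<Prod>\<pi>\<in>S. \<pi> ^ f \<pi>)"
  proof (rule prod_coprime_right)
    fix i assume "i \<in> S"
    hence "coprime q i" using insert by (intro primes_coprime) auto
    thus "coprime q (i ^ f i)" by simp
  qed
  hence "coprime (q ^ f q) (\<Prod>\<pi>\<in>S. \<pi> ^ f \<pi>)" by simp
  moreover have "(\<Prod>\<pi>\<in>S. \<pi> ^ f \<pi>) dvd x" using insert by auto
  moreover have "q ^ f q dvd x" using insert by auto
  ultimately show ?case using insert by (simp add: divides_mult)
qed simp

lemma pow_dvd_pderiv:
  fixes F q :: "'a::field poly"
  assumes "q ^ n dvd F"
  shows "q ^ (n - 1) dvd pderiv F"
proof (cases n)
  case 0
  then show ?thesis by simp
next
  case (Suc m)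
  obtain G where G: "F = q ^ n * G" using assms by (auto elim: dvdE)
  have "pderiv F = q ^ n * pderiv G + G * (smult (of_nat n) (q ^ m) * pderiv q)"
    unfolding G pderiv_mult Suc pderiv_power_Suc by simp
  also have "\<dots> = q ^ m * (q * pderiv G + G * smult (of_nat n) (pderiv q))"
    by (simp add: Suc algebra_simps)
  finally show ?thesis using Suc by simp
qed

lemma degree_pderiv_le': "degree (pderiv (a :: 'a::field poly)) \<le> degree a - 1"
  by (rule degree_le) (auto simp: coeff_pderiv coeff_eq_0)

lemma key_ineq:
  fixes a :: "'a::field_gcd poly"
  assumes da: "pderiv a \<noteq> 0" and l0: "of_nat l \<noteq> (0::'a)" and lpos: "l > 0"
    and fin: "finite S" and Ssub: "S \<subseteq> prime_factors (a^l - 1)"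
    and S2: "\<forall>\<pi>\<in>S. multiplicity \<pi> (a^l - 1) \<ge> 2"
  shows "(\<Sum>\<pi>\<in>S. multiplicity \<pi> (a^l-1) * degree \<pi>) \<le> 2 * (degree a - 1)"
proof -
  define F where "F = a^l - 1"
  define e where "e \<pi> = multiplicity \<pi> F" for \<pi>
  have pS: "\<forall>\<pi>\<in>S. prime \<pi>" using Ssub by (auto dest: in_prime_factors_imp_prime)
  have dv: "\<pi> ^ (e \<pi> - 1) dvd pderiv a" if "\<pi> \<in> S" for \<pi>
  proof -
    have pr: "prime \<pi>" using pS that by auto
    have "\<pi> dvd F" using Ssub that by (auto simp: F_def in_prime_factors_iff)
    have "\<not> \<pi> dvd a"
    proof
      assume "\<pi> dvd a"
      hence "\<pi> dvd a ^ l" using lpos by (metis dvd_power dvd_trans gr0_implies_Suc dvd_refl)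
      hence "\<pi> dvd a ^ l - F" using \<open>\<pi> dvd F\<close> by (rule dvd_diff)
      hence "\<pi> dvd 1" by (simp add: F_def)
      thus False using pr by (simp add: prime_def prime_elem_def)
    qed
    hence "coprime \<pi> a" by (rule prime_imp_coprime[OF pr])
    hence cop: "coprime (\<pi> ^ (e \<pi> - 1)) (a ^ (l - 1))" by simp
    have "\<pi> ^ (e \<pi> - 1) dvd pderiv F"
      by (rule pow_dvd_pderiv) (simp add: e_def multiplicity_dvd)
    also have "pderiv F = smult (of_nat l) (a ^ (l - 1) * pderiv a)"
      by (simp add: F_def pderiv_diff pderiv_power)
    finally have "\<pi> ^ (e \<pi> - 1) dvd a ^ (l - 1) * pderiv a" using l0 by (simp add: dvd_smult_iff)
    thus ?thesis using cop coprime_dvd_mult_right_iff by blast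
  qed
  have W: "(\<Prod>\<pi>\<in>S. \<pi> ^ (e \<pi> - 1)) dvd pderiv a"
    by (rule prod_prime_powers_dvd) (use fin pS dv in auto)
  have Wnz: "(\<Prod>\<pi>\<in>S. \<pi> ^ (e \<pi> - 1)) \<noteq> 0" using pS fin by auto
  have "degree (\<Prod>\<pi>\<in>S. \<pi> ^ (e \<pi> - 1)) = (\<Sum>\<pi>\<in>S. (e \<pi> - 1) * degree \<pi>)"
    by (subst degree_prod_eq_sum_degree) (use pS in \<open>auto intro!: sum.cong simp: degree_power_eq\<close>)
  moreover have "degree (\<Prod>\<pi>\<in>S. \<pi> ^ (e \<pi> - 1)) \<le> degree (pderiv a)"
    by (rule dvd_imp_degree[OF W Wnz da])
  ultimately have "(\<Sum>\<pi>\<in>S. (e \<pi> - 1) * degree \<pi>) \<le> degree a - 1"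
    using degree_pderiv_le'[of a] by linarith
  moreover have "(\<Sum>\<pi>\<in>S. e \<pi> * degree \<pi>) \<le> (\<Sum>\<pi>\<in>S. 2 * ((e \<pi> - 1) * degree \<pi>))"
  proof (rule sum_mono)
    fix \<pi> assume "\<pi> \<in> S"
    hence "e \<pi> \<ge> 2" using S2 by (simp add: e_def F_def)
    hence "e \<pi> \<le> 2 * (e \<pi> - 1)" by linarith
    hence "e \<pi> * degree \<pi> \<le> 2 * (e \<pi> - 1) * degree \<pi>" by (rule mult_le_mono1)
    thus "e \<pi> * degree \<pi> \<le> 2 * ((e \<pi> - 1) * degree \<pi>)" by (simp add: mult.assoc)
  qed
  ultimately show ?thesis by (simp add: e_def F_def sum_distrib_left[symmetric])
qed

theorem mainTheorem3:
  fixes a :: "'a::{finite,field_gcd} poly" and p r l :: nat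
  assumes "prime p" and "r > 0" and "CARD('a) = p ^ r"
    and "\<not> (\<exists>b. a = b ^ p)"
    and "prime l" and "l \<noteq> p"
  shows "let C1 = a - 1; Cl = (a ^ l - 1) div (a - 1) in
           int (degree (powerfull_part C1)) + int (degree (powerfull_part Cl))
             \<le> 2 * int (degree a) - 2
         \<and> int (degree (powerfree_part C1)) + int (degree (powerfree_part Cl))
             \<ge> int l * int (degree a) - 2 * int (degree a) + 2"
proof -
  have chp: "CHAR('a) = p" using char_eq[OF assms(1-3)] .
  have pc: "prime CHAR('a)" using chp assms(1) by simp
  have da: "pderiv a \<noteq> 0" using pth_root[OF pc, of a] assms(4) chp by auto
  have dpos: "degree a \<ge> 1"
  proof (rule ccontr)
    assume "\<not> degree a \<ge> 1"
    hence "degree a = 0" by simp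
    then obtain c where "a = [:c:]" by (rule degree_eq_zeroE) simp
    hence "pderiv a = 0" by simp
    thus False using da by simp
  qed
  have l0: "of_nat l \<noteq> (0::'a)"
  proof
    assume "of_nat l = (0::'a)"
    hence "p dvd l" using chp by (simp add: of_nat_eq_0_iff_char_dvd)
    thus False using assms(1,5,6) primes_dvd_imp_eq by blast
  qed
  have lpos: "l > 0" using assms(5) prime_gt_0_nat by blast
  define C1 where "C1 = a - 1"
  define Cl where "Cl = (a ^ l - 1) div (a - 1)"
  define F where "F = a ^ l - 1"
  have C1nz: "C1 \<noteq> 0"
  proof
    assume "C1 = 0" hence "a = 1" by (simp add: C1_def)
    thus False using dpos by simp
  qed
  have Cl_eq: "Cl = (\<Sum>i<l. a ^ i)"
    unfolding Cl_def power_diff_1_eq using C1nz C1_def by simp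
  have F_eq: "F = C1 * Cl" unfolding F_def C1_def Cl_eq by (rule power_diff_1_eq)
  have degF: "degree F = l * degree a"
  proof -
    have "degree (a ^ l) = l * degree a" using dpos by (intro degree_power_eq) auto
    moreover have "degree (a ^ l + - 1) = degree (a ^ l)"
      by (rule degree_add_eq_left) (use dpos lpos \<open>degree (a ^ l) = l * degree a\<close> in simp)
    ultimately show ?thesis by (simp add: F_def)
  qed
  have Fnz: "F \<noteq> 0" using degF dpos lpos by (metis degree_0 mult_is_0 not_one_le_zero neq0_conv)
  hence Clnz: "Cl \<noteq> 0" using F_eq by auto
  have cop: "coprime C1 Cl"
  proof (rule coprimeI)
    fix c assume c1: "c dvd C1" and cl: "c dvd Cl"
    have "Cl - of_nat l = (\<Sum>i<l. a ^ i - 1)"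
      by (simp add: Cl_eq sum_subtractf)
    moreover have "C1 dvd (\<Sum>i<l. a ^ i - 1)"
      by (intro dvd_sum) (simp add: C1_def power_diff_1_eq)
    ultimately have "C1 dvd Cl - of_nat l" by simp
    hence "c dvd Cl - of_nat l" using c1 dvd_trans by blast
    with cl have "c dvd Cl - (Cl - of_nat l)" by (rule dvd_diff)
    hence "c dvd of_nat l" by simp
    moreover have "is_unit (of_nat l :: 'a poly)"
    proof -
      have "is_unit (of_nat l :: 'a)" using l0 by (simp add: dvd_field_iff)
      hence "is_unit [:of_nat l :: 'a:]" using is_unit_const_poly_iff by blast
      thus ?thesis by (simp only: of_nat_poly)
    qed
    ultimately show "is_unit c" using dvd_unit_imp_unit by blast
  qed
  have notboth: "\<not> (\<pi> dvd C1 \<and> \<pi> dvd Cl)" if "prime \<pi>" for \<pi>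
    using cop that by (metis coprime_common_divisor not_prime_unit)
  have m1: "multiplicity \<pi> F = multiplicity \<pi> C1" if "\<pi> \<in> prime_factors C1" for \<pi>
  proof -
    have pr: "prime \<pi>" "\<pi> dvd C1" using that by (auto simp: in_prime_factors_iff)
    hence "multiplicity \<pi> Cl = 0" using notboth by (intro not_dvd_imp_multiplicity_0) auto
    thus ?thesis using F_eq prime_elem_multiplicity_mult_distrib[of \<pi> C1 Cl] pr C1nz Clnz by simp
  qed
  have ml: "multiplicity \<pi> F = multiplicity \<pi> Cl" if "\<pi> \<in> prime_factors Cl" for \<pi>
  proof -
    have pr: "prime \<pi>" "\<pi> dvd Cl" using that by (auto simp: in_prime_factors_iff)
    hence "multiplicity \<pi> C1 = 0" using notboth by (intro not_dvd_imp_multiplicity_0) auto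
    thus ?thesis using F_eq prime_elem_multiplicity_mult_distrib[of \<pi> C1 Cl] pr C1nz Clnz by simp
  qed
  define S1 where "S1 = {\<pi>\<in>prime_factors C1. multiplicity \<pi> C1 \<ge> 2}"
  define Sl where "Sl = {\<pi>\<in>prime_factors Cl. multiplicity \<pi> Cl \<ge> 2}"
  have disj: "S1 \<inter> Sl = {}" using notboth by (auto simp: S1_def Sl_def in_prime_factors_iff)
  have sub: "S1 \<union> Sl \<subseteq> prime_factors F"
    using Fnz by (auto simp: S1_def Sl_def in_prime_factors_iff F_eq)
  have mult2: "\<forall>\<pi>\<in>S1 \<union> Sl. multiplicity \<pi> F \<ge> 2"
    using m1 ml by (auto simp: S1_def Sl_def)
  have finS: "finite (S1 \<union> Sl)" by (simp add: S1_def Sl_def)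
  have "degree (powerfull_part C1) + degree (powerfull_part Cl)
        = (\<Sum>\<pi>\<in>S1. multiplicity \<pi> F * degree \<pi>) + (\<Sum>\<pi>\<in>Sl. multiplicity \<pi> F * degree \<pi>)"
    unfolding deg_V S1_def[symmetric] Sl_def[symmetric]
    by (intro arg_cong2[where f="(+)"] sum.cong) (auto simp: S1_def Sl_def m1 ml)
  also have "\<dots> = (\<Sum>\<pi>\<in>S1 \<union> Sl. multiplicity \<pi> F * degree \<pi>)"
    by (rule sum.union_disjoint[symmetric]) (use disj in \<open>auto simp: S1_def Sl_def\<close>)
  also have "\<dots> \<le> 2 * (degree a - 1)"
    using key_ineq[OF da l0 lpos finS] sub mult2 unfolding F_def by blast
  finally have V: "degree (powerfull_part C1) + degree (powerfull_part Cl) \<le> 2 * (degree a - 1)" .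
  have U: "degree (powerfree_part C1) + degree (powerfull_part C1)
         + (degree (powerfree_part Cl) + degree (powerfull_part Cl)) = l * degree a"
    using deg_UV[OF C1nz] deg_UV[OF Clnz] degF F_eq C1nz Clnz by (simp add: degree_mult_eq)
  have "int l * int (degree a) \<ge> 2 * int (degree a)"
  proof -
    have "l \<ge> 2" using assms(5) prime_ge_2_nat by blast
    thus ?thesis by (simp add: mult_right_mono)
  qed
  have V': "int (degree (powerfull_part C1)) + int (degree (powerfull_part Cl)) \<le> 2 * int (degree a) - 2"
    using V dpos by linarith
  have "int (degree (powerfree_part C1) + degree (powerfull_part C1)
         + (degree (powerfree_part Cl) + degree (powerfull_part Cl))) = int (l * degree a)"
    using U by simp
  hence U': "int (degree (powerfree_part C1)) + int (degree (powerfull_part C1))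
         + (int (degree (powerfree_part Cl)) + int (degree (powerfull_part Cl))) = int l * int (degree a)"
    by simp
  show ?thesis
    using V' U' unfolding Let_def Cl_def C1_def by linarith
qed

end
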